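(* Let $p\ge 2$ and let $\mathbb{F}_p$ be a binary floating-point format with $p$-bit significands and unit roundoff $u=2^{-p}$. Let $t\ge 1$ and $s_A,s_B\ge 1$ be integers. Let $A\in\mathbb{F}_p^{m\times k}$ and $B\in\mathbb{F}_p^{k\times n}$ have all entries nonzero. Define the scale factors $\alpha\in\mathbb{R}^m$, $\beta\in\mathbb{R}^n$ and the integer slices $A_{(\ell)}$ ($1\le \ell\le s_A$) and $B^{(h)}$ ($1\le h\le s_B$) as in the context, and put $$\tilde C=\alpha\beta^T\circ\sum_{\ell=1}^{s_A}\sum_{h=1}^{s_B}2^{-(\ell+h)t}A_{(\ell)}B^{(h)} .$$ Suppose $\hat C$ is computed as follows: each integer product $A_{(\ell)}B^{(h)}$ is computed exactly, converted exactly to $\mathbb{F}_p$ and scaled exactly by $2^{-(\ell+h)t}$ and by $\alpha\beta^T$ (entrywise), and then the resulting $\psi=s_As_B$ matrices are added entrywise in floating-point arithmetic (in any order) obeying the standard model $\mathrm{fl}(x+y)=(x+y)(1+\delta)$, $|\delta|\le u$, with no overflow or underflow, and $\psi u<1$. Then, entrywise, $$|\hat C-AB|\le\bigl(\zeta_{A,B}+\gamma_{\psi-1}(1+\zeta_{A,B})\bigr)\,|A|\,|B|,$$ where $\zeta_{A,B}=2^{-s_At}\kappa_A+2^{-s_Bt}\kappa_B+2^{-(s_A+s_B)t}\kappa_A\kappa_B$ and $\gamma_j=ju/(1-ju)$.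
   Context: Absolute values of matrices and inequalities between matrices are entrywise; $\circ$ is the Hadamard (entrywise) product. For $x\in\mathbb{R}$, $[x]$ denotes truncation toward zero ($\lfloor x\rfloor$ if $x\ge0$, $\lceil x\rceil$ if $x<0$). Scale factors: $\alpha_i$ is the smallest power of two strictly larger than $M_i=\max_{1\le j\le k}|a_{ij}|$ (i.e. $\alpha_i=2^{\lfloor\log_2 M_i\rfloor+1}$), and $\beta_j$ is the smallest power of two strictly larger than $N_j=\max_{1\le i\le k}|b_{ij}|$. Slices: $A_{(\ell)}=\bigl[2^{\ell t}\bigl(\mathrm{diag}(\alpha)^{-1}A-\sum_{r=1}^{\ell-1}2^{-rt}A_{(r)}\bigr)\bigr]$ for $\ell=1,\dots,s_A$, and $B^{(h)}=\bigl[2^{ht}\bigl(B\,\mathrm{diag}(\beta)^{-1}-\sum_{r=1}^{h-1}2^{-rt}B^{(r)}\bigr)\bigr]$ for $h=1,\dots,s_B$ (integer matrices, applied entrywise). Scaling measures: $\kappa_A=2\max_i\frac{\max_j|a_{ij}|}{\min_j|a_{ij}|}$ and $\kappa_B=2\max_j\frac{\max_i|b_{ij}|}{\min_i|b_{ij}|}$. *)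

theory Defs
  imports "HOL-Analysis.Analysis" "HOL-Library.Multiset"
begin

definition is_fp :: "nat \<Rightarrow> real \<Rightarrow> bool" where
  "is_fp p x \<longleftrightarrow> (\<exists>M e :: int. \<bar>M\<bar> < 2 ^ p \<and> x = real_of_int M * 2 powr real_of_int e)"

definition trunc0 :: "real \<Rightarrow> int" where
  "trunc0 x = (if x \<ge> 0 then \<lfloor>x\<rfloor> else \<lceil>x\<rceil>)"

definition pow2_above :: "real \<Rightarrow> real" where
  "pow2_above M = 2 powr real_of_int (\<lfloor>log 2 M\<rfloor> + 1)"

function slice :: "nat \<Rightarrow> real \<Rightarrow> nat \<Rightarrow> int" where
  "slice t x l = trunc0 (2 ^ (l * t) * (x - (\<Sum>r\<in>{1..<l}. real_of_int (slice t x r) / 2 ^ (r * t))))"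
  by auto
termination by (relation "Wellfounded.measure (\<lambda>(t, x, l). l)") auto

declare slice.simps [simp del]

definition mabs :: "real ^ 'b ^ 'a \<Rightarrow> real ^ 'b ^ 'a" where
  "mabs A = (\<chi> i j. \<bar>A $ i $ j\<bar>)"

definition alphaA :: "real ^ 'k ^ 'm \<Rightarrow> 'm \<Rightarrow> real" where
  "alphaA A i = pow2_above (Max ((\<lambda>j. \<bar>A $ i $ j\<bar>) ` UNIV))"

definition betaB :: "real ^ 'n ^ 'k \<Rightarrow> 'n \<Rightarrow> real" where
  "betaB B j = pow2_above (Max ((\<lambda>i. \<bar>B $ i $ j\<bar>) ` UNIV))"

definition sliceA :: "nat \<Rightarrow> real ^ 'k ^ 'm \<Rightarrow> nat \<Rightarrow> 'm \<Rightarrow> 'k \<Rightarrow> int" where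
  "sliceA t A l i j = slice t (A $ i $ j / alphaA A i) l"

definition sliceB :: "nat \<Rightarrow> real ^ 'n ^ 'k \<Rightarrow> nat \<Rightarrow> 'k \<Rightarrow> 'n \<Rightarrow> int" where
  "sliceB t B h i j = slice t (B $ i $ j / betaB B j) h"

definition sliceprod :: "nat \<Rightarrow> real ^ 'k ^ 'm \<Rightarrow> real ^ 'n ^ 'k \<Rightarrow> nat \<Rightarrow> nat \<Rightarrow> 'm \<Rightarrow> 'n \<Rightarrow> int" where
  "sliceprod t A B l h i j = (\<Sum>q\<in>UNIV. sliceA t A l i q * sliceB t B h q j)"

definition kappaA :: "real ^ 'k ^ 'm \<Rightarrow> real" where
  "kappaA A = 2 * Max ((\<lambda>i. Max ((\<lambda>j. \<bar>A $ i $ j\<bar>) ` UNIV) / Min ((\<lambda>j. \<bar>A $ i $ j\<bar>) ` UNIV)) ` UNIV)"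

definition kappaB :: "real ^ 'n ^ 'k \<Rightarrow> real" where
  "kappaB B = 2 * Max ((\<lambda>j. Max ((\<lambda>i. \<bar>B $ i $ j\<bar>) ` UNIV) / Min ((\<lambda>i. \<bar>B $ i $ j\<bar>) ` UNIV)) ` UNIV)"

definition gamma :: "real \<Rightarrow> nat \<Rightarrow> real" where
  "gamma u j = real j * u / (1 - real j * u)"

text \<open>Floating-point summation of a multiset of terms, in any order and with any
  parenthesization, each addition obeying the standard model fl(x+y) = (x+y)(1+delta),
  |delta| <= u.\<close>
inductive fl_sum :: "real \<Rightarrow> real multiset \<Rightarrow> real \<Rightarrow> bool" for u :: real where
  single: "fl_sum u {#x#} x"
| add: "\<lbrakk> fl_sum u M1 a; fl_sum u M2 b; \<bar>\<delta>\<bar> \<le> u \<rbrakk> \<Longrightarrow> fl_sum u (M1 + M2) ((a + b) * (1 + \<delta>))"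

end

theory Submission
  imports Defs
begin


lemma trunc0_props:
  shows "\<bar>y - real_of_int (trunc0 y)\<bar> < 1" and "trunc0 (-y) = - trunc0 y"
    and "y \<ge> 0 \<Longrightarrow> trunc0 y = \<lfloor>y\<rfloor>"
  unfolding trunc0_def
  by (auto simp: ceiling_minus floor_minus) linarith+

lemma slice_neg: "slice t (-x) l = - slice t x l"
proof (induction l rule: less_induct)
  case (less l)
  have "(\<Sum>r\<in>{1..<l}. real_of_int (slice t (-x) r) / 2 ^ (r * t))
       = - (\<Sum>r\<in>{1..<l}. real_of_int (slice t x r) / 2 ^ (r * t))"
    using less by (simp add: sum_negf[symmetric])
  then have "2 ^ (l * t) * (- x - (\<Sum>r\<in>{1..<l}. real_of_int (slice t (-x) r) / 2 ^ (r * t)))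
     = - (2 ^ (l * t) * (x - (\<Sum>r\<in>{1..<l}. real_of_int (slice t x r) / 2 ^ (r * t))))"
    by (simp add: algebra_simps)
  then show ?case
    by (subst (1 2) slice.simps) (simp add: trunc0_props(2))
qed

definition Ssl :: "nat \<Rightarrow> real \<Rightarrow> nat \<Rightarrow> real" where
  "Ssl t x n = (\<Sum>r\<in>{1..<n}. real_of_int (slice t x r) / 2 ^ (r * t))"

lemma Ssl_Suc: "n \<ge> 1 \<Longrightarrow> Ssl t x (Suc n) = Ssl t x n + real_of_int (slice t x n) / 2 ^ (n * t)"
  unfolding Ssl_def by (simp add: sum.atLeastLessThan_Suc)

lemma slice_Ssl: "slice t x n = trunc0 (2 ^ (n * t) * (x - Ssl t x n))"
  unfolding Ssl_def by (subst slice.simps) simp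

lemma slice_pos:
  assumes x: "x \<ge> 0"
  shows "0 \<le> x - Ssl t x (Suc n) \<and> (n \<ge> 1 \<longrightarrow> x - Ssl t x (Suc n) < 1 / 2 ^ (n * t))
     \<and> (\<forall>r\<in>{1..n}. slice t x r \<ge> 0)"
proof (induction n)
  case 0
  then show ?case using x by (simp add: Ssl_def)
next
  case (Suc n)
  define y where "y = 2 ^ (Suc n * t) * (x - Ssl t x (Suc n))"
  have p: "(0::real) < 2 ^ (Suc n * t)" by simp
  have y0: "y \<ge> 0" using Suc p unfolding y_def by simp
  have sl: "slice t x (Suc n) = \<lfloor>y\<rfloor>" using slice_Ssl[of t x "Suc n"] y0 trunc0_props(3)
    unfolding y_def by simp
  have e: "x - Ssl t x (Suc (Suc n)) = (y - \<lfloor>y\<rfloor>) / 2 ^ (Suc n * t)"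
    using Ssl_Suc[of "Suc n" t x] sl p unfolding y_def by (simp add: field_simps)
  have a: "0 \<le> y - \<lfloor>y\<rfloor>" "y - \<lfloor>y\<rfloor> < 1" by linarith+
  have "0 \<le> x - Ssl t x (Suc (Suc n))" using e a p by simp
  moreover have "x - Ssl t x (Suc (Suc n)) < 1 / 2 ^ (Suc n * t)" using e a p
    by (simp add: divide_strict_right_mono)
  moreover have "\<forall>r\<in>{1..Suc n}. slice t x r \<ge> 0"
    using Suc sl y0 by (auto simp: le_Suc_eq)
  ultimately show ?case by simp
qed

lemma slice_bounds:
  assumes n: "n \<ge> 1"
  shows "\<bar>x - (\<Sum>r\<in>{1..n}. real_of_int (slice t x r) / 2 ^ (r * t))\<bar> < 1 / 2 ^ (n * t)"
    and "(\<Sum>r\<in>{1..n}. \<bar>real_of_int (slice t x r)\<bar> / 2 ^ (r * t)) \<le> \<bar>x\<bar>"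
proof -
  have eqS: "\<And>z. (\<Sum>r\<in>{1..n}. real_of_int (slice t z r) / 2 ^ (r * t)) = Ssl t z (Suc n)"
    unfolding Ssl_def by (simp add: atLeastLessThanSuc_atLeastAtMost)
  have pos: "\<And>z. z \<ge> 0 \<Longrightarrow> \<bar>z - (\<Sum>r\<in>{1..n}. real_of_int (slice t z r) / 2 ^ (r * t))\<bar> < 1 / 2 ^ (n * t)
      \<and> (\<Sum>r\<in>{1..n}. \<bar>real_of_int (slice t z r)\<bar> / 2 ^ (r * t)) \<le> \<bar>z\<bar>"
  proof -
    fix z :: real assume z: "z \<ge> 0"
    note P = slice_pos[OF z, of t n]
    have "(\<Sum>r\<in>{1..n}. \<bar>real_of_int (slice t z r)\<bar> / 2 ^ (r * t))
        = (\<Sum>r\<in>{1..n}. real_of_int (slice t z r) / 2 ^ (r * t))"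
      using P by (intro sum.cong) auto
    then show "?thesis z" using P n z eqS[of z] by auto
  qed
  have "\<bar>x - (\<Sum>r\<in>{1..n}. real_of_int (slice t x r) / 2 ^ (r * t))\<bar> < 1 / 2 ^ (n * t)
    \<and> (\<Sum>r\<in>{1..n}. \<bar>real_of_int (slice t x r)\<bar> / 2 ^ (r * t)) \<le> \<bar>x\<bar>"
  proof (cases "x \<ge> 0")
    case True then show ?thesis using pos by blast
  next
    case False
    have sn: "\<And>r. slice t x r = - slice t (-x) r" using slice_neg[of t "-x"] by simp
    have "\<bar>- x - (\<Sum>r\<in>{1..n}. real_of_int (slice t (-x) r) / 2 ^ (r * t))\<bar> < 1 / 2 ^ (n * t)
      \<and> (\<Sum>r\<in>{1..n}. \<bar>real_of_int (slice t (-x) r)\<bar> / 2 ^ (r * t)) \<le> \<bar>-x\<bar>"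
      using pos[of "-x"] False by simp
    moreover have "\<And>a b::real. \<bar>-a - b\<bar> = \<bar>a + b\<bar>" by linarith
    ultimately show ?thesis unfolding sn by (simp add: sum_negf)
  qed
  then show "\<bar>x - (\<Sum>r\<in>{1..n}. real_of_int (slice t x r) / 2 ^ (r * t))\<bar> < 1 / 2 ^ (n * t)"
    "(\<Sum>r\<in>{1..n}. \<bar>real_of_int (slice t x r)\<bar> / 2 ^ (r * t)) \<le> \<bar>x\<bar>" by auto
qed



lemma sum_mset_abs_le: "\<bar>sum_mset (M::real multiset)\<bar> \<le> sum_mset (image_mset abs M)"
  by (induction M) (auto intro: order_trans[OF abs_triangle_ineq])

lemma sum_mset_abs_nonneg: "0 \<le> sum_mset (image_mset abs (M::real multiset))"
  by (induction M) auto

lemma fl_sum_err: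
  assumes "fl_sum u M s" and u: "u \<ge> 0"
  shows "size M \<ge> 1 \<and> \<bar>s - sum_mset M\<bar> \<le> ((1 + u) ^ (size M - 1) - 1) * sum_mset (image_mset abs M)"
  using assms(1)
proof (induction rule: fl_sum.induct)
  case (single x)
  then show ?case by simp
next
  case (add M1 a M2 b \<delta>)
  define S1 where "S1 = sum_mset (image_mset abs M1)"
  define S2 where "S2 = sum_mset (image_mset abs M2)"
  define g1 where "g1 = (1 + u) ^ (size M1 - 1) - 1"
  define g2 where "g2 = (1 + u) ^ (size M2 - 1) - 1"
  define G where "G = (1 + u) ^ (size (M1 + M2) - 1) - 1"
  have s1: "size M1 \<ge> 1" and s2: "size M2 \<ge> 1" using add by auto
  have e1: "\<bar>a - sum_mset M1\<bar> \<le> g1 * S1" using add unfolding g1_def S1_def by auto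
  have e2: "\<bar>b - sum_mset M2\<bar> \<le> g2 * S2" using add unfolding g2_def S2_def by auto
  have A1: "\<bar>sum_mset M1\<bar> \<le> S1" unfolding S1_def by (rule sum_mset_abs_le)
  have A2: "\<bar>sum_mset M2\<bar> \<le> S2" unfolding S2_def by (rule sum_mset_abs_le)
  have S1p: "S1 \<ge> 0" unfolding S1_def by (rule sum_mset_abs_nonneg)
  have S2p: "S2 \<ge> 0" unfolding S2_def by (rule sum_mset_abs_nonneg)
  have "(1 + u) ^ (size M1 - 1) * (1 + u) = (1 + u) ^ size M1"
    using s1 by (metis Suc_diff_1 less_le_trans zero_less_one power_Suc2)
  also have "\<dots> \<le> (1 + u) ^ (size (M1 + M2) - 1)"
    using s2 u by (intro power_increasing) auto
  finally have h1: "(1 + g1) * (1 + u) - 1 \<le> G" unfolding g1_def G_def by simp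
  have "(1 + u) ^ (size M2 - 1) * (1 + u) = (1 + u) ^ size M2"
    using s2 by (metis Suc_diff_1 less_le_trans zero_less_one power_Suc2)
  also have "\<dots> \<le> (1 + u) ^ (size (M1 + M2) - 1)"
    using s1 u by (intro power_increasing) auto
  finally have h2: "(1 + g2) * (1 + u) - 1 \<le> G" unfolding g2_def G_def by simp
  have g1p: "g1 \<ge> 0" unfolding g1_def using u by simp
  have g2p: "g2 \<ge> 0" unfolding g2_def using u by simp
  have "\<bar>a\<bar> \<le> (1 + g1) * S1" using e1 A1 by (simp add: algebra_simps)
  moreover have "\<bar>b\<bar> \<le> (1 + g2) * S2" using e2 A2 by (simp add: algebra_simps)
  ultimately have ab: "\<bar>\<delta> * (a + b)\<bar> \<le> u * ((1 + g1) * S1 + (1 + g2) * S2)"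
    using add.hyps(3) abs_triangle_ineq[of a b] u
    by (simp add: abs_mult) (metis abs_ge_zero add_mono_thms_linordered_semiring(1) mult_mono order_trans)
  have "(a + b) * (1 + \<delta>) - sum_mset (M1 + M2) = (a - sum_mset M1) + (b - sum_mset M2) + \<delta> * (a + b)"
    by (simp add: algebra_simps)
  then have "\<bar>(a + b) * (1 + \<delta>) - sum_mset (M1 + M2)\<bar> \<le> g1 * S1 + g2 * S2 + u * ((1 + g1) * S1 + (1 + g2) * S2)"
    using e1 e2 ab by linarith
  also have "\<dots> = ((1 + g1) * (1 + u) - 1) * S1 + ((1 + g2) * (1 + u) - 1) * S2"
    by (simp add: algebra_simps)
  also have "\<dots> \<le> G * S1 + G * S2"
    using h1 h2 S1p S2p by (intro add_mono mult_right_mono) auto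
  also have "\<dots> = G * sum_mset (image_mset abs (M1 + M2))"
    unfolding S1_def S2_def by (simp add: algebra_simps)
  finally show ?case using s1 unfolding G_def by simp
qed

lemma pow_gamma:
  fixes u :: real
  assumes u: "u \<ge> 0" and mu: "real m * u < 1"
  shows "(1 + u) ^ m - 1 \<le> gamma u m"
proof -
  have "\<forall>m. real m * u < 1 \<longrightarrow> (1 + u) ^ m * (1 - real m * u) \<le> 1"
  proof
    fix m show "real m * u < 1 \<longrightarrow> (1 + u) ^ m * (1 - real m * u) \<le> 1"
    proof (induction m)
      case 0 then show ?case by simp
    next
      case (Suc m)
      show ?case
      proof
        assume h: "real (Suc m) * u < 1"
        then have h': "real m * u < 1" using u by (simp add: algebra_simps)
        have "(1 + u) ^ Suc m * (1 - real (Suc m) * u) = (1 + u) ^ m * (1 - real m * u - real m * u * u - u * u)"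
          by (simp add: algebra_simps)
        also have "\<dots> \<le> (1 + u) ^ m * (1 - real m * u)"
        proof (intro mult_left_mono)
          have "0 \<le> real m * u * u" using u by simp
          moreover have "0 \<le> u * u" using u by simp
          ultimately show "1 - real m * u - real m * u * u - u * u \<le> 1 - real m * u" by linarith
        qed (use u in simp)
        also have "\<dots> \<le> 1" using Suc h' by simp
        finally show "(1 + u) ^ Suc m * (1 - real (Suc m) * u) \<le> 1" .
      qed
    qed
  qed
  then have k: "(1 + u) ^ m * (1 - real m * u) \<le> 1" using mu by blast
  have pos: "1 - real m * u > 0" using mu by simp
  have "(1 + u) ^ m \<le> 1 / (1 - real m * u)" using k pos by (simp add: field_simps)
  then have "(1 + u) ^ m - 1 \<le> 1 / (1 - real m * u) - 1" by simp
  also have "\<dots> = gamma u m" unfolding gamma_def using pos by (simp add: field_simps)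
  finally show ?thesis .
qed

lemma pow2_above_bounds:
  assumes M: "M > 0"
  shows "M < pow2_above M" and "pow2_above M \<le> 2 * M"
proof -
  let ?L = "log 2 M"
  have "M = 2 powr ?L" using M by simp
  also have "\<dots> < 2 powr real_of_int (\<lfloor>?L\<rfloor> + 1)"
    by (intro powr_less_mono) linarith+
  finally show "M < pow2_above M" unfolding pow2_above_def .
  have "pow2_above M \<le> 2 powr (?L + 1)" unfolding pow2_above_def
    by (intro powr_mono) linarith+
  also have "\<dots> = 2 * M" using M by (simp add: powr_add)
  finally show "pow2_above M \<le> 2 * M" .
qed



lemma alpha_kappa:
  fixes A :: "real ^ 'k::finite ^ 'm::finite"
  assumes nz: "\<forall>q. A $ i $ q \<noteq> 0"
  shows "alphaA A i > 0" and "\<And>q. alphaA A i \<le> kappaA A * \<bar>A $ i $ q\<bar>" and "kappaA A \<ge> 0"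
proof -
  define Mi where "Mi = Max ((\<lambda>j. \<bar>A $ i $ j\<bar>) ` UNIV)"
  define mi where "mi = Min ((\<lambda>j. \<bar>A $ i $ j\<bar>) ` UNIV)"
  have Mge: "\<And>q. \<bar>A $ i $ q\<bar> \<le> Mi" unfolding Mi_def by (intro Max_ge) auto
  have mle: "\<And>q. mi \<le> \<bar>A $ i $ q\<bar>" unfolding mi_def by (intro Min_le) auto
  have "mi \<in> (\<lambda>j. \<bar>A $ i $ j\<bar>) ` UNIV" unfolding mi_def by (intro Min_in) auto
  then have mpos: "mi > 0" using nz by auto
  obtain q0 :: 'k where True by simp
  have Mpos: "Mi > 0" using Mge[of q0] nz by (metis zero_less_abs_iff order_less_le_trans)
  have al: "alphaA A i \<le> 2 * Mi" "Mi < alphaA A i"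
    using pow2_above_bounds[OF Mpos] unfolding alphaA_def Mi_def by auto
  then show "alphaA A i > 0" using Mpos by simp
  have rk: "Mi / mi \<le> kappaA A / 2" unfolding kappaA_def Mi_def mi_def
    by simp
  show "\<And>q. alphaA A i \<le> kappaA A * \<bar>A $ i $ q\<bar>"
  proof -
    fix q
    have aq: "\<bar>A $ i $ q\<bar> > 0" using nz by auto
    have "Mi / \<bar>A $ i $ q\<bar> \<le> Mi / mi"
      using mle[of q] mpos Mpos by (intro divide_left_mono) auto
    then have "Mi / \<bar>A $ i $ q\<bar> \<le> kappaA A / 2" using rk by linarith
    then have "Mi \<le> kappaA A / 2 * \<bar>A $ i $ q\<bar>" using aq by (simp add: field_simps)
    then show "alphaA A i \<le> kappaA A * \<bar>A $ i $ q\<bar>" using al by linarith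
  qed
  have "Mi / mi > 0" using Mpos mpos by simp
  then show "kappaA A \<ge> 0" using rk by linarith
qed

lemma beta_kappa:
  fixes B :: "real ^ 'n::finite ^ 'k::finite"
  assumes nz: "\<forall>q. B $ q $ j \<noteq> 0"
  shows "betaB B j > 0" and "\<And>q. betaB B j \<le> kappaB B * \<bar>B $ q $ j\<bar>" and "kappaB B \<ge> 0"
proof -
  define Mi where "Mi = Max ((\<lambda>i. \<bar>B $ i $ j\<bar>) ` UNIV)"
  define mi where "mi = Min ((\<lambda>i. \<bar>B $ i $ j\<bar>) ` UNIV)"
  have Mge: "\<And>q. \<bar>B $ q $ j\<bar> \<le> Mi" unfolding Mi_def by (intro Max_ge) auto
  have mle: "\<And>q. mi \<le> \<bar>B $ q $ j\<bar>" unfolding mi_def by (intro Min_le) auto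
  have "mi \<in> (\<lambda>i. \<bar>B $ i $ j\<bar>) ` UNIV" unfolding mi_def by (intro Min_in) auto
  then have mpos: "mi > 0" using nz by auto
  obtain q0 :: 'k where True by simp
  have Mpos: "Mi > 0" using Mge[of q0] nz by (metis zero_less_abs_iff order_less_le_trans)
  have al: "betaB B j \<le> 2 * Mi" "Mi < betaB B j"
    using pow2_above_bounds[OF Mpos] unfolding betaB_def Mi_def by auto
  then show "betaB B j > 0" using Mpos by simp
  have rk: "Mi / mi \<le> kappaB B / 2" unfolding kappaB_def Mi_def mi_def
    by simp
  show "\<And>q. betaB B j \<le> kappaB B * \<bar>B $ q $ j\<bar>"
  proof -
    fix q
    have aq: "\<bar>B $ q $ j\<bar> > 0" using nz by auto
    have "Mi / \<bar>B $ q $ j\<bar> \<le> Mi / mi"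
      using mle[of q] mpos Mpos by (intro divide_left_mono) auto
    then have "Mi / \<bar>B $ q $ j\<bar> \<le> kappaB B / 2" using rk by linarith
    then have "Mi \<le> kappaB B / 2 * \<bar>B $ q $ j\<bar>" using aq by (simp add: field_simps)
    then show "betaB B j \<le> kappaB B * \<bar>B $ q $ j\<bar>" using al by linarith
  qed
  have "Mi / mi > 0" using Mpos mpos by simp
  then show "kappaB B \<ge> 0" using rk by linarith
qed



lemma prod_sums: "((c::real) * sum f L) * (d * sum g H) = (\<Sum>l\<in>L. \<Sum>h\<in>H. (c * f l) * (d * g h))"
proof -
  have "c * sum f L = (\<Sum>l\<in>L. c * f l)" by (simp add: sum_distrib_left)
  moreover have "d * sum g H = (\<Sum>h\<in>H. d * g h)" by (simp add: sum_distrib_left)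
  ultimately show ?thesis by (simp only: sum_product)
qed


theorem mainTheorem1:
  fixes p t sA sB :: nat
    and A :: "real ^ 'k::finite ^ 'm::finite"
    and B :: "real ^ 'n::finite ^ 'k"
    and Chat :: "real ^ 'n ^ 'm"
  assumes p: "p \<ge> 2" and t: "t \<ge> 1" and sA: "sA \<ge> 1" and sB: "sB \<ge> 1"
    and A_fp: "\<forall>i j. is_fp p (A $ i $ j) \<and> A $ i $ j \<noteq> 0"
    and B_fp: "\<forall>i j. is_fp p (B $ i $ j) \<and> B $ i $ j \<noteq> 0"
    and exact_conv: "\<forall>l\<in>{1..sA}. \<forall>h\<in>{1..sB}. \<forall>i j.
           is_fp p (real_of_int (sliceprod t A B l h i j))"
    and psi_u: "real (sA * sB) * (1 / 2 ^ p) < 1"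
    and Chat: "\<forall>i j. fl_sum (1 / 2 ^ p)
           (image_mset (\<lambda>(l, h). alphaA A i * betaB B j * (1 / 2 ^ ((l + h) * t))
                                   * real_of_int (sliceprod t A B l h i j))
              (mset_set ({1..sA} \<times> {1..sB})))
           (Chat $ i $ j)"
  shows "\<forall>i j. \<bar>Chat $ i $ j - (A ** B) $ i $ j\<bar> \<le>
     (let \<zeta> = kappaA A / 2 ^ (sA * t) + kappaB B / 2 ^ (sB * t)
               + kappaA A * kappaB B / 2 ^ ((sA + sB) * t)
      in \<zeta> + gamma (1 / 2 ^ p) (sA * sB - 1) * (1 + \<zeta>)) * (mabs A ** mabs B) $ i $ j"
proof (intro allI)
  fix i j
  define u :: real where "u = 1 / 2 ^ p"
  define \<alpha> where "\<alpha> = alphaA A i"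
  define \<beta> where "\<beta> = betaB B j"
  define kA where "kA = kappaA A"
  define kB where "kB = kappaB B"
  define eA :: real where "eA = kA / 2 ^ (sA * t)"
  define eB :: real where "eB = kB / 2 ^ (sB * t)"
  define \<zeta> where "\<zeta> = eA + eB + eA * eB"
  define a where "a q = A $ i $ q" for q
  define b where "b q = B $ q $ j" for q
  define SA where "SA q = (\<Sum>l\<in>{1..sA}. real_of_int (sliceA t A l i q) / 2 ^ (l * t))" for q
  define SB where "SB q = (\<Sum>h\<in>{1..sB}. real_of_int (sliceB t B h q j) / 2 ^ (h * t))" for q
  define SAa where "SAa q = (\<Sum>l\<in>{1..sA}. \<bar>real_of_int (sliceA t A l i q)\<bar> / 2 ^ (l * t))" for q
  define SBa where "SBa q = (\<Sum>h\<in>{1..sB}. \<bar>real_of_int (sliceB t B h q j)\<bar> / 2 ^ (h * t))" for q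
  define f where "f = (\<lambda>(l, h). alphaA A i * betaB B j * (1 / 2 ^ ((l + h) * t))
                                   * real_of_int (sliceprod t A B l h i j))"
  define S where "S = {1..sA} \<times> {1..sB}"
  define P where "P = (\<Sum>q\<in>UNIV. \<bar>a q\<bar> * \<bar>b q\<bar>)"
  have u0: "u \<ge> 0" unfolding u_def by simp
  have AK: "\<alpha> > 0" "\<And>q. \<alpha> \<le> kA * \<bar>a q\<bar>" "kA \<ge> 0"
    using alpha_kappa[of A i] A_fp unfolding \<alpha>_def kA_def a_def by auto
  have BK: "\<beta> > 0" "\<And>q. \<beta> \<le> kB * \<bar>b q\<bar>" "kB \<ge> 0"
    using beta_kappa[of B j] B_fp unfolding \<beta>_def kB_def b_def by auto
  have eA0: "eA \<ge> 0" and eB0: "eB \<ge> 0" unfolding eA_def eB_def using AK BK by auto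
  have \<zeta>0: "\<zeta> \<ge> 0" unfolding \<zeta>_def using eA0 eB0 by simp
  have P0: "P \<ge> 0" unfolding P_def by (intro sum_nonneg) auto
  have \<zeta>eq: "kappaA A / 2 ^ (sA * t) + kappaB B / 2 ^ (sB * t)
               + kappaA A * kappaB B / 2 ^ ((sA + sB) * t) = \<zeta>"
    unfolding \<zeta>_def eA_def eB_def kA_def kB_def by (simp add: add_mult_distrib power_add)
  have dA: "\<bar>\<alpha> * SA q - a q\<bar> \<le> eA * \<bar>a q\<bar>" and sAa: "\<alpha> * SAa q \<le> \<bar>a q\<bar>" for q
  proof -
    note sb = slice_bounds[OF sA, where x="a q / \<alpha>" and t=t]
    have e1: "SA q = (\<Sum>r\<in>{1..sA}. real_of_int (slice t (a q / \<alpha>) r) / 2 ^ (r * t))"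
      unfolding SA_def sliceA_def a_def \<alpha>_def ..
    have e2: "SAa q = (\<Sum>r\<in>{1..sA}. \<bar>real_of_int (slice t (a q / \<alpha>) r)\<bar> / 2 ^ (r * t))"
      unfolding SAa_def sliceA_def a_def \<alpha>_def ..
    have "\<bar>\<alpha> * SA q - a q\<bar> = \<alpha> * \<bar>a q / \<alpha> - SA q\<bar>"
      using AK(1) by (simp add: field_simps abs_mult[symmetric] abs_minus_commute)
    also have "\<dots> \<le> \<alpha> * (1 / 2 ^ (sA * t))"
      using sb(1) AK(1) unfolding e1[symmetric] by (intro mult_left_mono) auto
    also have "\<dots> \<le> kA * \<bar>a q\<bar> * (1 / 2 ^ (sA * t))"
      using AK(2)[of q] by (intro mult_right_mono) auto
    also have "\<dots> = eA * \<bar>a q\<bar>" unfolding eA_def by simp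
    finally show "\<bar>\<alpha> * SA q - a q\<bar> \<le> eA * \<bar>a q\<bar>" .
    have "\<alpha> * SAa q \<le> \<alpha> * \<bar>a q / \<alpha>\<bar>" using sb(2) AK(1) unfolding e2[symmetric]
      by (intro mult_left_mono) auto
    then show "\<alpha> * SAa q \<le> \<bar>a q\<bar>" using AK(1) by (simp add: abs_div)
  qed
  have dB: "\<bar>\<beta> * SB q - b q\<bar> \<le> eB * \<bar>b q\<bar>" and sBa: "\<beta> * SBa q \<le> \<bar>b q\<bar>" for q
  proof -
    note sb = slice_bounds[OF sB, where x="b q / \<beta>" and t=t]
    have e1: "SB q = (\<Sum>r\<in>{1..sB}. real_of_int (slice t (b q / \<beta>) r) / 2 ^ (r * t))"
      unfolding SB_def sliceB_def b_def \<beta>_def ..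
    have e2: "SBa q = (\<Sum>r\<in>{1..sB}. \<bar>real_of_int (slice t (b q / \<beta>) r)\<bar> / 2 ^ (r * t))"
      unfolding SBa_def sliceB_def b_def \<beta>_def ..
    have "\<bar>\<beta> * SB q - b q\<bar> = \<beta> * \<bar>b q / \<beta> - SB q\<bar>"
      using BK(1) by (simp add: field_simps abs_mult[symmetric] abs_minus_commute)
    also have "\<dots> \<le> \<beta> * (1 / 2 ^ (sB * t))"
      using sb(1) BK(1) unfolding e1[symmetric] by (intro mult_left_mono) auto
    also have "\<dots> \<le> kB * \<bar>b q\<bar> * (1 / 2 ^ (sB * t))"
      using BK(2)[of q] by (intro mult_right_mono) auto
    also have "\<dots> = eB * \<bar>b q\<bar>" unfolding eB_def by simp
    finally show "\<bar>\<beta> * SB q - b q\<bar> \<le> eB * \<bar>b q\<bar>" .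
    have "\<beta> * SBa q \<le> \<beta> * \<bar>b q / \<beta>\<bar>" using sb(2) BK(1) unfolding e2[symmetric]
      by (intro mult_left_mono) auto
    then show "\<beta> * SBa q \<le> \<bar>b q\<bar>" using BK(1) by (simp add: abs_div)
  qed
  have fsplit: "f (l, h) = (\<Sum>q\<in>UNIV. (\<alpha> * (real_of_int (sliceA t A l i q) / 2 ^ (l * t)))
         * (\<beta> * (real_of_int (sliceB t B h q j) / 2 ^ (h * t))))" for l h
    unfolding f_def sliceprod_def \<alpha>_def \<beta>_def
    by (simp add: sum_distrib_left power_add add_mult_distrib algebra_simps sum_divide_distrib)
  have fabs: "\<bar>f (l, h)\<bar> \<le> (\<Sum>q\<in>UNIV. (\<alpha> * (\<bar>real_of_int (sliceA t A l i q)\<bar> / 2 ^ (l * t)))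
         * (\<beta> * (\<bar>real_of_int (sliceB t B h q j)\<bar> / 2 ^ (h * t))))" for l h
    unfolding fsplit
    by (rule order_trans[OF sum_abs], rule sum_mono, insert AK(1) BK(1), simp add: abs_mult)
  have Ct: "sum f S = (\<Sum>q\<in>UNIV. (\<alpha> * SA q) * (\<beta> * SB q))"
  proof -
    have "sum f S = (\<Sum>l\<in>{1..sA}. \<Sum>h\<in>{1..sB}. f (l, h))"
      unfolding S_def by (simp add: sum.cartesian_product)
    also have "\<dots> = (\<Sum>q\<in>UNIV. \<Sum>l\<in>{1..sA}. \<Sum>h\<in>{1..sB}.
        (\<alpha> * (real_of_int (sliceA t A l i q) / 2 ^ (l * t)))
         * (\<beta> * (real_of_int (sliceB t B h q j) / 2 ^ (h * t))))"
      unfolding fsplit by (simp add: sum.swap[of _ UNIV] sum.swap[of _ "{1..sB}"])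
    also have "\<dots> = (\<Sum>q\<in>UNIV. (\<alpha> * SA q) * (\<beta> * SB q))"
      unfolding SA_def SB_def prod_sums ..
    finally show ?thesis .
  qed
  have Ca: "(\<Sum>x\<in>S. \<bar>f x\<bar>) \<le> P"
  proof -
    have "(\<Sum>x\<in>S. \<bar>f x\<bar>) = (\<Sum>l\<in>{1..sA}. \<Sum>h\<in>{1..sB}. \<bar>f (l, h)\<bar>)"
      unfolding S_def by (simp add: sum.cartesian_product)
    also have "\<dots> \<le> (\<Sum>l\<in>{1..sA}. \<Sum>h\<in>{1..sB}. \<Sum>q\<in>UNIV. (\<alpha> * (\<bar>real_of_int (sliceA t A l i q)\<bar> / 2 ^ (l * t)))
         * (\<beta> * (\<bar>real_of_int (sliceB t B h q j)\<bar> / 2 ^ (h * t))))"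
      by (intro sum_mono fabs)
    also have "\<dots> = (\<Sum>q\<in>UNIV. (\<alpha> * SAa q) * (\<beta> * SBa q))"
      unfolding SAa_def SBa_def prod_sums
      by (simp add: sum.swap[of _ UNIV] sum.swap[of _ "{1..sB}"])
    also have "\<dots> \<le> P" unfolding P_def
    proof (intro sum_mono)
      fix q
      have "SAa q \<ge> 0" "SBa q \<ge> 0" unfolding SAa_def SBa_def by (auto intro: sum_nonneg)
      then show "\<alpha> * SAa q * (\<beta> * SBa q) \<le> \<bar>a q\<bar> * \<bar>b q\<bar>"
        using sAa[of q] sBa[of q] AK(1) BK(1) by (intro mult_mono) auto
    qed
    finally show ?thesis .
  qed
  have CtE: "\<bar>sum f S - (A ** B) $ i $ j\<bar> \<le> \<zeta> * P"
  proof -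
    have AB: "(A ** B) $ i $ j = (\<Sum>q\<in>UNIV. a q * b q)"
      unfolding matrix_matrix_mult_def a_def b_def by simp
    have "\<bar>sum f S - (A ** B) $ i $ j\<bar> = \<bar>\<Sum>q\<in>UNIV. (\<alpha> * SA q) * (\<beta> * SB q) - a q * b q\<bar>"
      unfolding Ct AB by (simp add: sum_subtractf)
    also have "\<dots> \<le> (\<Sum>q\<in>UNIV. \<bar>(\<alpha> * SA q) * (\<beta> * SB q) - a q * b q\<bar>)" by (rule sum_abs)
    also have "\<dots> \<le> (\<Sum>q\<in>UNIV. \<zeta> * (\<bar>a q\<bar> * \<bar>b q\<bar>))"
    proof (intro sum_mono)
      fix q
      define x where "x = \<alpha> * SA q - a q"
      define y where "y = \<beta> * SB q - b q"
      have "(\<alpha> * SA q) * (\<beta> * SB q) - a q * b q = x * y + x * b q + a q * y"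
        unfolding x_def y_def by (simp add: algebra_simps)
      then have "\<bar>(\<alpha> * SA q) * (\<beta> * SB q) - a q * b q\<bar> \<le> \<bar>x\<bar> * \<bar>y\<bar> + \<bar>x\<bar> * \<bar>b q\<bar> + \<bar>a q\<bar> * \<bar>y\<bar>"
        by (simp add: abs_mult[symmetric] abs_triangle_ineq order_trans[OF abs_triangle_ineq])
      also have "\<dots> \<le> (eA * \<bar>a q\<bar>) * (eB * \<bar>b q\<bar>) + (eA * \<bar>a q\<bar>) * \<bar>b q\<bar> + \<bar>a q\<bar> * (eB * \<bar>b q\<bar>)"
        using dA[of q] dB[of q] unfolding x_def[symmetric] y_def[symmetric]
        by (intro add_mono mult_mono) auto
      also have "\<dots> = \<zeta> * (\<bar>a q\<bar> * \<bar>b q\<bar>)" unfolding \<zeta>_def by (simp add: algebra_simps)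
      finally show "\<bar>(\<alpha> * SA q) * (\<beta> * SB q) - a q * b q\<bar> \<le> \<zeta> * (\<bar>a q\<bar> * \<bar>b q\<bar>)" .
    qed
    also have "\<dots> = \<zeta> * P" unfolding P_def by (simp add: sum_distrib_left)
    finally show ?thesis .
  qed
  have fl: "fl_sum u (image_mset f (mset_set S)) (Chat $ i $ j)"
    using Chat unfolding u_def f_def S_def by blast
  note fe = fl_sum_err[OF fl u0]
  have cardS: "size (image_mset f (mset_set S)) = sA * sB" unfolding S_def by (simp add: card_cartesian_product)
  have sm: "sum_mset (image_mset f (mset_set S)) = sum f S" by (simp add: sum_unfold_sum_mset)
  have sma: "sum_mset (image_mset abs (image_mset f (mset_set S))) = (\<Sum>x\<in>S. \<bar>f x\<bar>)"
    by (simp add: sum_unfold_sum_mset image_mset.compositionality o_def)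
  define g where "g = gamma u (sA * sB - 1)"
  have mu: "real (sA * sB - 1) * u < 1"
  proof -
    have "real (sA * sB - 1) \<le> real (sA * sB)" by (rule of_nat_mono) simp
    then have "real (sA * sB - 1) * u \<le> real (sA * sB) * u" using u0 by (rule mult_right_mono)
    then show ?thesis using psi_u unfolding u_def by linarith
  qed
  have pg: "(1 + u) ^ (sA * sB - 1) - 1 \<le> g" unfolding g_def by (rule pow_gamma[OF u0 mu])
  have g0: "g \<ge> 0" using pg u0 by (smt (verit) one_le_power)
  have S0: "(\<Sum>x\<in>S. \<bar>f x\<bar>) \<ge> 0" by (intro sum_nonneg) auto
  have "\<bar>Chat $ i $ j - sum f S\<bar> \<le> ((1 + u) ^ (sA * sB - 1) - 1) * (\<Sum>x\<in>S. \<bar>f x\<bar>)"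
    using fe cardS sm sma by simp
  also have "\<dots> \<le> g * P" using pg S0 Ca g0 by (intro mult_mono) auto
  finally have E1: "\<bar>Chat $ i $ j - sum f S\<bar> \<le> g * P" .
  have Peq: "(mabs A ** mabs B) $ i $ j = P"
    unfolding matrix_matrix_mult_def mabs_def P_def a_def b_def by simp
  have "\<bar>Chat $ i $ j - (A ** B) $ i $ j\<bar> \<le> \<zeta> * P + g * P" using E1 CtE by linarith
  also have "\<dots> \<le> (\<zeta> + g * (1 + \<zeta>)) * P"
    using g0 \<zeta>0 P0 by (simp add: algebra_simps)
  finally show "\<bar>Chat $ i $ j - (A ** B) $ i $ j\<bar> \<le>
     (let \<zeta> = kappaA A / 2 ^ (sA * t) + kappaB B / 2 ^ (sB * t)
               + kappaA A * kappaB B / 2 ^ ((sA + sB) * t)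
      in \<zeta> + gamma (1 / 2 ^ p) (sA * sB - 1) * (1 + \<zeta>)) * (mabs A ** mabs B) $ i $ j"
    unfolding \<zeta>eq Let_def Peq g_def u_def .
qed


end
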